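(* Consider a credit-attribution game in which every paper has exactly two authors, two distinct players $x,y$, and the reliability extension of the full obligation game with fixed $p_x,p_y\in[0,1]$, baseline reliabilities $p^*_l\in(0,1]$, cost slopes $L_l,R_l>0$ and budget $B\ge0$. In the pairwise attack problem one must choose a feasible fractional attack on $x$ that leaves the reliabilities of $y$ and of all coauthors of $y$ at their baseline values, minimizing $Sh[\overline{v_{FO}}](x)$. Then the following is an optimal pairwise attack: run the greedy procedure (sort by decreasing $C(x,l)/L_l$, decrease to $0$ in order while the budget allows, decrease the next one as much as the remaining budget allows, leave everything else at baseline) restricted to the players $l\in CA(x)\setminus(CA(y)\cup\{y\})$.
   Context: Credit-attribution game: authors $N$, papers $P_k$ with author sets $Auth_k$ and weights $w_k\in\mathbb{R}_+$; $CA(z)$ is the set of coauthors of $z$; $C(x,l)=\sum w_k$ over papers authored by both $x$ and $l$. $v_{FO}(S)=\sum\{w_k:Auth_k\subseteq S\}$. For $T\subseteq S$, $\Pi_{T,S}=\prod_{i\in T}p_i\prod_{i\in S\setminus T}(1-p_i)$; reliability extension $\overline v(S)=\sum_{T\subseteq S}v(T)\Pi_{T,S}$. Shapley value $Sh[v](x)=\frac1{n!}\sum_\pi[v(S^x_\pi\cup\{x\})-v(S^x_\pi)]$. Fractional attack on $x$: $p_x$ fixed; for $j\ne x$ choose $p_j\in[0,1]$ at cost $u_j(p_j)=L_j(p^*_j-p_j)$ if $p_j<p^*_j$, $R_j(p_j-p^*_j)$ otherwise; feasible if the total cost is at most $B$. *)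

theory Defs
  imports Complex_Main "HOL-Combinatorics.Multiset_Permutations"
begin

text \<open>Papers are indexed by a finite set K; Auth k is the author set of paper k,
  w k its weight.\<close>

definition v_FO :: "'k set \<Rightarrow> ('k \<Rightarrow> 'a set) \<Rightarrow> ('k \<Rightarrow> real) \<Rightarrow> 'a set \<Rightarrow> real" where
  "v_FO K Auth w S = (\<Sum>k\<in>{k\<in>K. Auth k \<subseteq> S}. w k)"

definition Pi_rel :: "('a \<Rightarrow> real) \<Rightarrow> 'a set \<Rightarrow> 'a set \<Rightarrow> real" where
  "Pi_rel p T S = (\<Prod>i\<in>T. p i) * (\<Prod>i\<in>S - T. 1 - p i)"

definition rel_ext :: "('a \<Rightarrow> real) \<Rightarrow> ('a set \<Rightarrow> real) \<Rightarrow> 'a set \<Rightarrow> real" where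
  "rel_ext p v S = (\<Sum>T\<in>Pow S. v T * Pi_rel p T S)"

definition pred_set :: "'a list \<Rightarrow> 'a \<Rightarrow> 'a set" where
  "pred_set ord x = set (takeWhile (\<lambda>z. z \<noteq> x) ord)"

definition shapley :: "'a set \<Rightarrow> ('a set \<Rightarrow> real) \<Rightarrow> 'a \<Rightarrow> real" where
  "shapley N v x = (1 / fact (card N)) *
     (\<Sum>ord\<in>permutations_of_set N. v (insert x (pred_set ord x)) - v (pred_set ord x))"

definition coauthors :: "'k set \<Rightarrow> ('k \<Rightarrow> 'a set) \<Rightarrow> 'a \<Rightarrow> 'a set" where
  "coauthors K Auth z = {l. \<exists>k\<in>K. z \<in> Auth k \<and> l \<in> Auth k \<and> l \<noteq> z}"

definition Cw :: "'k set \<Rightarrow> ('k \<Rightarrow> 'a set) \<Rightarrow> ('k \<Rightarrow> real) \<Rightarrow> 'a \<Rightarrow> 'a \<Rightarrow> real" where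
  "Cw K Auth w x l = (\<Sum>k\<in>{k\<in>K. x \<in> Auth k \<and> l \<in> Auth k}. w k)"

definition cost :: "('a \<Rightarrow> real) \<Rightarrow> ('a \<Rightarrow> real) \<Rightarrow> ('a \<Rightarrow> real) \<Rightarrow> 'a \<Rightarrow> real \<Rightarrow> real" where
  "cost L R pstar j q = (if q < pstar j then L j * (pstar j - q) else R j * (q - pstar j))"

definition feasible_attack ::
  "'a set \<Rightarrow> ('a \<Rightarrow> real) \<Rightarrow> ('a \<Rightarrow> real) \<Rightarrow> ('a \<Rightarrow> real) \<Rightarrow> real \<Rightarrow> 'a \<Rightarrow> real \<Rightarrow> ('a \<Rightarrow> real) \<Rightarrow> bool" where
  "feasible_attack N L R pstar B x px p \<longleftrightarrow>
     p x = px \<and> (\<forall>j\<in>N - {x}. 0 \<le> p j \<and> p j \<le> 1) \<and>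
     (\<Sum>j\<in>N - {x}. cost L R pstar j (p j)) \<le> B"

text \<open>Pairwise attack: additionally y and all coauthors of y (other than x, whose
  reliability is fixed anyway) keep their baseline reliabilities.\<close>
definition pairwise_attack ::
  "'k set \<Rightarrow> ('k \<Rightarrow> 'a set) \<Rightarrow> 'a set \<Rightarrow> ('a \<Rightarrow> real) \<Rightarrow> ('a \<Rightarrow> real) \<Rightarrow> ('a \<Rightarrow> real) \<Rightarrow> real
    \<Rightarrow> 'a \<Rightarrow> real \<Rightarrow> 'a \<Rightarrow> ('a \<Rightarrow> real) \<Rightarrow> bool" where
  "pairwise_attack K Auth N L R pstar B x px y p \<longleftrightarrow>
     feasible_attack N L R pstar B x px p \<and> p y = pstar y \<and>
     (\<forall>l\<in>coauthors K Auth y - {x}. p l = pstar l)"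

fun greedy :: "('a \<Rightarrow> real) \<Rightarrow> ('a \<Rightarrow> real) \<Rightarrow> real \<Rightarrow> 'a list \<Rightarrow> ('a \<Rightarrow> real)" where
  "greedy L pstar b [] = pstar"
| "greedy L pstar b (l # ls) =
     (if L l * pstar l \<le> b then (greedy L pstar (b - L l * pstar l) ls)(l := 0)
      else pstar(l := pstar l - b / L l))"

end

theory Submission
  imports Defs
begin


fun gain :: "('a \<Rightarrow> real) \<Rightarrow> ('a \<Rightarrow> real) \<Rightarrow> ('a \<Rightarrow> real) \<Rightarrow> real \<Rightarrow> 'a list \<Rightarrow> real" where
  "gain c L pstar b [] = 0"
| "gain c L pstar b (l # ls) =
     (if L l * pstar l \<le> b then c l * pstar l + gain c L pstar (b - L l * pstar l) ls
      else c l * b / L l)"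

lemma greedy_out: "j \<notin> set ls \<Longrightarrow> greedy L pstar b ls j = pstar j"
  by (induction ls arbitrary: b) auto

lemma greedy_range:
  assumes "\<forall>j\<in>set ls. L j > 0 \<and> pstar j > 0" "b \<ge> 0" "j \<in> set ls"
  shows "0 \<le> greedy L pstar b ls j \<and> greedy L pstar b ls j \<le> pstar j"
  using assms
proof (induction ls arbitrary: b)
  case Nil then show ?case by simp
next
  case (Cons l ls)
  show ?case
  proof (cases "L l * pstar l \<le> b")
    case True
    then show ?thesis using Cons by (cases "j = l") auto
  next
    case False
    have "b / L l \<le> pstar l" using False Cons.prems
      by (simp add: divide_le_eq mult.commute)
    moreover have "b / L l \<ge> 0" using Cons.prems by simp
    ultimately show ?thesis using False Cons.prems by auto
  qed
qed

lemma greedy_cost: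
  assumes "\<forall>j\<in>set ls. L j > 0 \<and> pstar j > 0" "b \<ge> 0" "distinct ls"
  shows "(\<Sum>j\<in>set ls. L j * (pstar j - greedy L pstar b ls j)) \<le> b"
  using assms
proof (induction ls arbitrary: b)
  case Nil then show ?case by simp
next
  case (Cons l ls)
  show ?case
  proof (cases "L l * pstar l \<le> b")
    case True
    have "(\<Sum>j\<in>set ls. L j * (pstar j - greedy L pstar (b - L l * pstar l) ls j)) \<le> b - L l * pstar l"
      using Cons True by auto
    moreover have "(\<Sum>j\<in>set ls. L j * (pstar j - greedy L pstar b (l#ls) j)) =
       (\<Sum>j\<in>set ls. L j * (pstar j - greedy L pstar (b - L l * pstar l) ls j))"
      using True Cons.prems by (intro sum.cong) auto
    ultimately show ?thesis using True Cons.prems by simp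
  next
    case False
    have "(\<Sum>j\<in>set ls. L j * (pstar j - greedy L pstar b (l#ls) j)) = 0"
      using False Cons.prems by (intro sum.neutral) auto
    then show ?thesis using False Cons.prems by simp
  qed
qed

lemma greedy_gain:
  assumes "distinct ls"
  shows "(\<Sum>j\<in>set ls. c j * (pstar j - greedy L pstar b ls j)) = gain c L pstar b ls"
  using assms
proof (induction ls arbitrary: b)
  case Nil then show ?case by simp
next
  case (Cons l ls)
  show ?case
  proof (cases "L l * pstar l \<le> b")
    case True
    have "(\<Sum>j\<in>set ls. c j * (pstar j - greedy L pstar b (l#ls) j)) =
       (\<Sum>j\<in>set ls. c j * (pstar j - greedy L pstar (b - L l * pstar l) ls j))"
      using True Cons.prems by (intro sum.cong) auto
    then show ?thesis using True Cons by simp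
  next
    case False
    have "(\<Sum>j\<in>set ls. c j * (pstar j - greedy L pstar b (l#ls) j)) = 0"
      using False Cons.prems by (intro sum.neutral) auto
    then show ?thesis using False Cons.prems by simp
  qed
qed

lemma gain_zero:
  assumes "\<forall>j\<in>set ls. L j > 0 \<and> pstar j > 0"
  shows "gain c L pstar 0 ls = 0"
  using assms by (cases ls) (auto simp: not_le dest: mult_pos_pos)

lemma gain_lip:
  assumes "\<forall>j\<in>set ls. L j > 0 \<and> pstar j > 0" "b \<ge> 0" "t \<ge> 0" "M \<ge> 0"
    "\<forall>j\<in>set ls. c j / L j \<le> M"
  shows "gain c L pstar (b + t) ls \<le> gain c L pstar b ls + M * t"
  using assms
proof (induction ls arbitrary: b t)
  case Nil then show ?case by simp
next
  case (Cons l ls)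
  define a where "a = L l * pstar l"
  have Ll: "L l > 0" "pstar l > 0" and rl: "c l / L l \<le> M" using Cons.prems by auto
  show ?case
  proof (cases "a \<le> b")
    case True
    have "gain c L pstar (b - a + t) ls \<le> gain c L pstar (b - a) ls + M * t"
      using Cons True by auto
    moreover have "a \<le> b + t" using True Cons.prems by simp
    ultimately show ?thesis using True unfolding a_def by (simp add: algebra_simps)
  next
    case False
    show ?thesis
    proof (cases "a \<le> b + t")
      case True
      have "gain c L pstar (0 + (b + t - a)) ls \<le> gain c L pstar 0 ls + M * (b + t - a)"
        using Cons.IH[of 0 "b + t - a"] Cons.prems True by auto
      moreover have "gain c L pstar 0 ls = 0" using gain_zero Cons.prems by auto
      moreover have "c l * pstar l + M * (b + t - a) \<le> c l * b / L l + M * t"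
      proof -
        define r where "r = c l / L l"
        have h1: "c l * pstar l = r * a" using Ll unfolding a_def r_def by simp
        have h2: "c l * b / L l = r * b" unfolding r_def by simp
        have h3: "(M - r) * (b - a) \<le> 0"
          using rl False unfolding r_def by (intro mult_nonneg_nonpos) auto
        have h4: "(M - r) * (b - a) = M*b - M*a - r*b + r*a" by (simp add: algebra_simps)
        show ?thesis unfolding h1 h2 using h3 h4 by (simp add: algebra_simps)
      qed
      ultimately show ?thesis using True False unfolding a_def by simp
    next
      case False2: False
      have "c l * (b + t) / L l = c l * b / L l + (c l / L l) * t" by (simp add: algebra_simps add_divide_distrib)
      moreover have "(c l / L l) * t \<le> M * t" using rl Cons.prems by (intro mult_right_mono) auto
      ultimately show ?thesis using False False2 unfolding a_def by simp
    qed
  qed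
qed

lemma knapsack:
  assumes "distinct ls" "sorted_wrt (\<lambda>a b. c a / L a \<ge> c b / L b) ls"
    "\<forall>j\<in>set ls. L j > 0 \<and> pstar j > 0 \<and> c j \<ge> 0" "b \<ge> 0"
    "\<forall>j\<in>set ls. 0 \<le> d j \<and> d j \<le> pstar j" "(\<Sum>j\<in>set ls. L j * d j) \<le> b"
  shows "(\<Sum>j\<in>set ls. c j * d j) \<le> gain c L pstar b ls"
  using assms
proof (induction ls arbitrary: b)
  case Nil then show ?case by simp
next
  case (Cons l ls)
  define a where "a = L l * pstar l"
  have Ll: "L l > 0" "pstar l > 0" "c l \<ge> 0" "d l \<ge> 0" "d l \<le> pstar l" using Cons.prems by auto
  have sumL: "L l * d l + (\<Sum>j\<in>set ls. L j * d j) \<le> b" using Cons.prems by simp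
  have rat: "\<forall>j\<in>set ls. c j / L j \<le> c l / L l" using Cons.prems(2) by simp
  show ?case
  proof (cases "a \<le> b")
    case True
    define b2 where "b2 = (b - a) + L l * (pstar l - d l)"
    have b2: "b2 \<ge> 0" using True Ll unfolding b2_def by (simp add: mult_nonneg_nonneg)
    have "(\<Sum>j\<in>set ls. L j * d j) \<le> b2" using sumL unfolding b2_def a_def by (simp add: algebra_simps)
    then have "(\<Sum>j\<in>set ls. c j * d j) \<le> gain c L pstar b2 ls"
      using Cons.IH[of b2] Cons.prems b2 by auto
    also have "\<dots> \<le> gain c L pstar (b - a) ls + (c l / L l) * (L l * (pstar l - d l))"
      unfolding b2_def using Cons.prems True Ll rat
      by (intro gain_lip) (auto simp: mult_nonneg_nonneg)
    also have "(c l / L l) * (L l * (pstar l - d l)) = c l * (pstar l - d l)" using Ll by simp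
    finally show ?thesis using True Cons.prems unfolding a_def by (simp add: algebra_simps)
  next
    case False
    have "(\<Sum>j\<in>set (l#ls). c j * d j) \<le> (\<Sum>j\<in>set (l#ls). (c l / L l) * (L j * d j))"
    proof (intro sum_mono)
      fix j assume j: "j \<in> set (l#ls)"
      have "c j / L j \<le> c l / L l" using rat j by auto
      then have "(c j / L j) * (L j * d j) \<le> (c l / L l) * (L j * d j)"
        using Cons.prems j by (intro mult_right_mono) auto
      then show "c j * d j \<le> (c l / L l) * (L j * d j)" using Cons.prems j by auto
    qed
    also have "\<dots> = (c l / L l) * (\<Sum>j\<in>set (l#ls). L j * d j)" by (simp add: sum_distrib_left)
    also have "\<dots> \<le> (c l / L l) * b" using Cons.prems Ll by (intro mult_left_mono) auto
    finally show ?thesis using False unfolding a_def by simp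
  qed
qed



lemma sum_supersets:
  assumes "finite S" "A \<subseteq> S"
  shows "(\<Sum>T\<in>Pow S. (if A \<subseteq> T then Pi_rel p T S else 0)) = (\<Prod>i\<in>A. p i)"
proof -
  have fA: "finite A" using assms finite_subset by blast
  have "(\<Sum>T\<in>Pow S. (if A \<subseteq> T then Pi_rel p T S else 0)) = (\<Sum>T\<in>{T\<in>Pow S. A \<subseteq> T}. Pi_rel p T S)"
    using assms by (subst sum.inter_filter) auto
  also have "\<dots> = (\<Sum>U\<in>Pow (S - A). Pi_rel p (A \<union> U) S)"
    by (rule sum.reindex_bij_witness[where j="\<lambda>T. T - A" and i="\<lambda>U. A \<union> U"]) (use assms in \<open>auto simp: sup.absorb2\<close>)
  also have "\<dots> = (\<Sum>U\<in>Pow (S - A). (\<Prod>i\<in>A. p i) * ((\<Prod>i\<in>U. p i) * (\<Prod>i\<in>(S - A) - U. 1 - p i)))"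
  proof (rule sum.cong)
    fix U assume U: "U \<in> Pow (S - A)"
    have fU: "finite U" using U assms by (meson PowD finite_Diff finite_subset)
    have "(\<Prod>i\<in>A \<union> U. p i) = (\<Prod>i\<in>A. p i) * (\<Prod>i\<in>U. p i)"
      using U fA fU by (intro prod.union_disjoint) auto
    moreover have "S - (A \<union> U) = (S - A) - U" by auto
    ultimately show "Pi_rel p (A \<union> U) S = (\<Prod>i\<in>A. p i) * ((\<Prod>i\<in>U. p i) * (\<Prod>i\<in>(S - A) - U. 1 - p i))"
      unfolding Pi_rel_def by simp
  qed simp
  also have "\<dots> = (\<Prod>i\<in>A. p i) * (\<Prod>i\<in>S - A. p i + (1 - p i))"
  proof -
    have "(\<Prod>i\<in>S - A. p i + (1 - p i)) = (\<Sum>U\<in>Pow (S - A). (\<Prod>i\<in>U. p i) * (\<Prod>i\<in>(S - A) - U. 1 - p i))"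
      using assms by (intro prod_add) auto
    then show ?thesis by (simp add: sum_distrib_left[symmetric])
  qed
  also have "\<dots> = (\<Prod>i\<in>A. p i)" by simp
  finally show ?thesis .
qed

lemma relext_vFO:
  assumes "finite S" "finite K"
  shows "rel_ext p (v_FO K Auth w) S = (\<Sum>k\<in>K. w k * (\<Prod>i\<in>Auth k. p i) * (if Auth k \<subseteq> S then 1 else 0))"
proof -
  have v: "v_FO K Auth w T = (\<Sum>k\<in>K. (if Auth k \<subseteq> T then w k else 0))" for T
    unfolding v_FO_def using assms(2) by (simp add: sum.inter_filter)
  have "rel_ext p (v_FO K Auth w) S = (\<Sum>T\<in>Pow S. \<Sum>k\<in>K. w k * (if Auth k \<subseteq> T then Pi_rel p T S else 0))"
    unfolding rel_ext_def v sum_distrib_right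
    by (intro sum.cong refl) simp
  also have "\<dots> = (\<Sum>k\<in>K. w k * (\<Sum>T\<in>Pow S. (if Auth k \<subseteq> T then Pi_rel p T S else 0)))"
    by (subst sum.swap) (simp add: sum_distrib_left)
  also have "\<dots> = (\<Sum>k\<in>K. w k * (\<Prod>i\<in>Auth k. p i) * (if Auth k \<subseteq> S then 1 else 0))"
  proof (rule sum.cong)
    fix k assume "k \<in> K"
    show "w k * (\<Sum>T\<in>Pow S. (if Auth k \<subseteq> T then Pi_rel p T S else 0)) =
          w k * (\<Prod>i\<in>Auth k. p i) * (if Auth k \<subseteq> S then 1 else 0)"
    proof (cases "Auth k \<subseteq> S")
      case True then show ?thesis using sum_supersets[OF assms(1) True] by simp
    next
      case False
      have "(\<Sum>T\<in>Pow S. (if Auth k \<subseteq> T then Pi_rel p T S else 0)) = 0"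
        using False by (intro sum.neutral) auto
      then show ?thesis using False by simp
    qed
  qed simp
  finally show ?thesis .
qed


lemma x_notin_pred: "x \<notin> pred_set ord x"
  unfolding pred_set_def by (auto dest: set_takeWhileD)

lemma pred_subset: "pred_set ord x \<subseteq> set ord"
  unfolding pred_set_def by (auto dest: set_takeWhileD)

lemma pred_one:
  "distinct ord \<Longrightarrow> x \<in> set ord \<Longrightarrow> l \<in> set ord \<Longrightarrow> x \<noteq> l \<Longrightarrow>
   (l \<in> pred_set ord x) = (x \<notin> pred_set ord l)"
proof (induction ord)
  case Nil then show ?case by simp
next
  case (Cons a ord)
  show ?case
  proof (cases "a = x")
    case True then show ?thesis using Cons.prems unfolding pred_set_def by simp
  next
    case False
    show ?thesis
    proof (cases "a = l")
      case True then show ?thesis using Cons.prems unfolding pred_set_def by simp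
    next
      case False2: False
      have "x \<in> set ord" "l \<in> set ord" using Cons.prems False False2 by auto
      then have "(l \<in> pred_set ord x) = (x \<notin> pred_set ord l)" using Cons by simp
      then show ?thesis using False False2 unfolding pred_set_def by simp
    qed
  qed
qed

lemma pred_swap:
  assumes "\<And>z. (\<sigma> z = x) = (z = l)"
  shows "pred_set (map \<sigma> ord) x = \<sigma> ` pred_set ord l"
proof -
  have "(\<lambda>z. z \<noteq> x) \<circ> \<sigma> = (\<lambda>z. z \<noteq> l)" using assms by (auto simp: fun_eq_iff)
  then show ?thesis unfolding pred_set_def by (simp add: takeWhile_map)
qed

lemma count_half:
  assumes "finite N" "x \<in> N" "l \<in> N" "x \<noteq> l"
  shows "(\<Sum>ord\<in>permutations_of_set N. (if l \<in> pred_set ord x then 1 else 0) :: real) = fact (card N) / 2"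
proof -
  let ?P = "permutations_of_set N"
  define \<sigma> where "\<sigma> = (\<lambda>z. if z = x then l else if z = l then x else z)"
  have fP: "finite ?P" using assms by simp
  have A: "(\<Sum>ord\<in>?P. (if l \<in> pred_set ord x then 1 else 0) :: real) +
           (\<Sum>ord\<in>?P. (if x \<in> pred_set ord l then 1 else 0)) = (\<Sum>ord\<in>?P. 1)"
    unfolding sum.distrib[symmetric]
  proof (rule sum.cong)
    fix ord assume "ord \<in> ?P"
    then have "distinct ord" "set ord = N" by (auto dest: permutations_of_setD)
    then show "(if l \<in> pred_set ord x then 1 else 0) + (if x \<in> pred_set ord l then 1 else 0) = (1::real)"
      using pred_one[of ord x l] assms by auto
  qed simp
  have ss: "\<sigma> (\<sigma> z) = z" for z unfolding \<sigma>_def by auto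
  have inj: "inj \<sigma>" by (metis ss injI)
  have sl: "\<sigma> l = x" unfolding \<sigma>_def by simp
  have sN: "\<sigma> ` N = N"
  proof
    show "\<sigma> ` N \<subseteq> N" using assms unfolding \<sigma>_def by auto
    show "N \<subseteq> \<sigma> ` N"
    proof
      fix z assume "z \<in> N"
      then have "\<sigma> z \<in> N" using assms unfolding \<sigma>_def by auto
      then show "z \<in> \<sigma> ` N" using image_eqI[of z \<sigma> "\<sigma> z"] ss by simp
    qed
  qed
  have mP: "map \<sigma> ord \<in> ?P" if "ord \<in> ?P" for ord
  proof -
    have "set ord = N" "distinct ord" using that by (auto dest: permutations_of_setD)
    then have "set (map \<sigma> ord) = N" "distinct (map \<sigma> ord)"
      using sN inj by (auto simp: distinct_map intro: inj_on_subset)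
    then show ?thesis by blast
  qed
  have B: "(\<Sum>ord\<in>?P. (if l \<in> pred_set ord x then 1 else 0) :: real) =
           (\<Sum>ord\<in>?P. (if x \<in> pred_set ord l then 1 else 0))"
  proof (rule sum.reindex_bij_witness[where i="map \<sigma>" and j="map \<sigma>"])
    fix ord assume "ord \<in> ?P"
    show "map \<sigma> (map \<sigma> ord) = ord" by (simp add: comp_def ss)
    show "map \<sigma> ord \<in> ?P" using mP \<open>ord \<in> ?P\<close> .
    show "map \<sigma> (map \<sigma> ord) = ord" by (simp add: comp_def ss)
    show "map \<sigma> ord \<in> ?P" using mP \<open>ord \<in> ?P\<close> .
    have "\<And>z. (\<sigma> z = l) = (z = x)" unfolding \<sigma>_def using assms(4) by auto
    then have "pred_set (map \<sigma> ord) l = \<sigma> ` pred_set ord x" by (rule pred_swap)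
    moreover have "(x \<in> \<sigma> ` pred_set ord x) = (l \<in> pred_set ord x)"
      using inj_image_mem_iff[OF inj, of l "pred_set ord x"] sl by simp
    ultimately show "(if x \<in> pred_set (map \<sigma> ord) l then 1 else 0) = (if l \<in> pred_set ord x then 1 else (0::real))"
      by simp
  qed
  have "(\<Sum>ord\<in>?P. (1::real)) = fact (card N)" using assms by simp
  then show ?thesis using A B by simp
qed



lemma shapley_closed:
  assumes fN: "finite N" and fK: "finite K"
    and AK: "\<And>k. k \<in> K \<Longrightarrow> Auth k \<subseteq> N \<and> card (Auth k) = 2" and xN: "x \<in> N"
  shows "shapley N (rel_ext p (v_FO K Auth w)) x =
         p x / 2 * (\<Sum>l\<in>coauthors K Auth x. Cw K Auth w x l * p l)"
proof -
  let ?P = "permutations_of_set N"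
  let ?I = "\<lambda>A S. if A \<subseteq> S then 1 else (0::real)"
  define D where "D k = (\<Sum>ord\<in>?P. ?I (Auth k) (insert x (pred_set ord x)) - ?I (Auth k) (pred_set ord x))" for k
  have fin_pred: "finite (pred_set ord x)" for ord unfolding pred_set_def by simp
  have "(\<Sum>ord\<in>?P. rel_ext p (v_FO K Auth w) (insert x (pred_set ord x)) - rel_ext p (v_FO K Auth w) (pred_set ord x))
     = (\<Sum>ord\<in>?P. \<Sum>k\<in>K. w k * (\<Prod>i\<in>Auth k. p i) * (?I (Auth k) (insert x (pred_set ord x)) - ?I (Auth k) (pred_set ord x)))"
  proof (rule sum.cong[OF refl])
    fix ord
    show "rel_ext p (v_FO K Auth w) (insert x (pred_set ord x)) - rel_ext p (v_FO K Auth w) (pred_set ord x)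
      = (\<Sum>k\<in>K. w k * (\<Prod>i\<in>Auth k. p i) * (?I (Auth k) (insert x (pred_set ord x)) - ?I (Auth k) (pred_set ord x)))"
      using fin_pred[of ord] fK
      by (simp add: relext_vFO sum_subtractf[symmetric] right_diff_distrib)
  qed
  also have "\<dots> = (\<Sum>k\<in>K. w k * (\<Prod>i\<in>Auth k. p i) * D k)"
    unfolding D_def by (subst sum.swap) (simp add: sum_distrib_left)
  also have "\<dots> = (\<Sum>k\<in>K. w k * (\<Prod>i\<in>Auth k. p i) * (if x \<in> Auth k then fact (card N) / 2 else 0))"
  proof (rule sum.cong[OF refl])
    fix k assume k: "k \<in> K"
    have "D k = (if x \<in> Auth k then fact (card N) / 2 else 0)"
    proof (cases "x \<in> Auth k")
      case False
      then have "D k = 0" unfolding D_def by (intro sum.neutral) (auto simp: subset_insert)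
      then show ?thesis using False by simp
    next
      case True
      obtain a b where ab: "Auth k = {a, b}" "a \<noteq> b" using AK[OF k] card_2_iff by metis
      obtain m where m: "Auth k = {x, m}" "m \<noteq> x" using ab True by auto
      have mN: "m \<in> N" using AK[OF k] m by auto
      have "D k = (\<Sum>ord\<in>?P. (if m \<in> pred_set ord x then 1 else 0))"
        unfolding D_def
      proof (rule sum.cong[OF refl])
        fix ord
        have "x \<notin> pred_set ord x" by (rule x_notin_pred)
        then show "?I (Auth k) (insert x (pred_set ord x)) - ?I (Auth k) (pred_set ord x)
             = (if m \<in> pred_set ord x then 1 else 0)" using m by auto
      qed
      also have "\<dots> = fact (card N) / 2" using count_half[OF fN xN mN] m by simp
      finally show ?thesis using True by simp
    qed
    then show "w k * (\<Prod>i\<in>Auth k. p i) * D k = w k * (\<Prod>i\<in>Auth k. p i) * (if x \<in> Auth k then fact (card N) / 2 else 0)"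
      by simp
  qed
  finally have S: "shapley N (rel_ext p (v_FO K Auth w)) x =
     (\<Sum>k\<in>K. w k * (\<Prod>i\<in>Auth k. p i) * (if x \<in> Auth k then 1 / 2 else 0))"
    unfolding shapley_def by (simp add: sum_distrib_left) (auto intro!: sum.cong)
  let ?CA = "coauthors K Auth x"
  have CAN: "?CA \<subseteq> N" unfolding coauthors_def using AK by auto
  have fCA: "finite ?CA" using CAN fN finite_subset by blast
  have xCA: "x \<notin> ?CA" unfolding coauthors_def by auto
  have "p x / 2 * (\<Sum>l\<in>?CA. Cw K Auth w x l * p l) =
        p x / 2 * (\<Sum>l\<in>?CA. \<Sum>k\<in>K. (if x \<in> Auth k \<and> l \<in> Auth k then w k * p l else 0))"
    unfolding Cw_def using fK by (simp add: sum.inter_filter sum_distrib_right if_distrib cong: if_cong) (auto intro!: sum.cong)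
  also have "\<dots> = (\<Sum>k\<in>K. p x / 2 * (\<Sum>l\<in>?CA. (if x \<in> Auth k \<and> l \<in> Auth k then w k * p l else 0)))"
    by (subst sum.swap) (simp add: sum_distrib_left)
  also have "\<dots> = (\<Sum>k\<in>K. w k * (\<Prod>i\<in>Auth k. p i) * (if x \<in> Auth k then 1 / 2 else 0))"
  proof (rule sum.cong[OF refl])
    fix k assume k: "k \<in> K"
    show "p x / 2 * (\<Sum>l\<in>?CA. (if x \<in> Auth k \<and> l \<in> Auth k then w k * p l else 0)) =
          w k * (\<Prod>i\<in>Auth k. p i) * (if x \<in> Auth k then 1 / 2 else 0)"
    proof (cases "x \<in> Auth k")
      case False then show ?thesis by simp
    next
      case True
      obtain a b where ab: "Auth k = {a, b}" "a \<noteq> b" using AK[OF k] card_2_iff by metis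
      obtain m where m: "Auth k = {x, m}" "m \<noteq> x" using ab True by auto
      have mCA: "m \<in> ?CA" unfolding coauthors_def using k m by auto
      have "{l \<in> ?CA. l \<in> Auth k} = {m}" using m mCA xCA by auto
      then have "(\<Sum>l\<in>?CA. (if x \<in> Auth k \<and> l \<in> Auth k then w k * p l else 0)) = w k * p m"
        using True fCA by (simp add: sum.inter_filter[symmetric])
      moreover have "(\<Prod>i\<in>Auth k. p i) = p x * p m" using m by simp
      ultimately show ?thesis using True by simp
    qed
  qed
  finally show ?thesis using S by simp
qed


lemma cost_nonneg:
  assumes "L j > 0" "R j > 0"
  shows "cost L R pstar j q \<ge> 0"
  using assms unfolding cost_def by (auto intro: mult_nonneg_nonneg)

theorem corollary3:
  fixes K :: "'k set" and Auth :: "'k \<Rightarrow> 'a set" and w :: "'k \<Rightarrow> real"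
    and N :: "'a set" and x y :: 'a and px :: real
    and pstar L R :: "'a \<Rightarrow> real" and B :: real and ls :: "'a list"
  assumes "finite N" and "finite K"
    and "\<And>k. k \<in> K \<Longrightarrow> Auth k \<subseteq> N \<and> card (Auth k) = 2"
    and "\<And>k. k \<in> K \<Longrightarrow> w k \<ge> 0"
    and "x \<in> N" and "y \<in> N" and "x \<noteq> y"
    and "0 \<le> px" and "px \<le> 1"
    and "\<And>l. l \<in> N - {x} \<Longrightarrow> 0 < pstar l \<and> pstar l \<le> 1"
    and "\<And>l. l \<in> N - {x} \<Longrightarrow> L l > 0 \<and> R l > 0"
    and "B \<ge> 0"
    and "distinct ls"
    and "set ls = coauthors K Auth x - (coauthors K Auth y \<union> {y})"
    and "sorted_wrt (\<lambda>a b. Cw K Auth w x a / L a \<ge> Cw K Auth w x b / L b) ls"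
  shows "pairwise_attack K Auth N L R pstar B x px y ((greedy L pstar B ls)(x := px)) \<and>
         (\<forall>q. pairwise_attack K Auth N L R pstar B x px y q \<longrightarrow>
            shapley N (rel_ext ((greedy L pstar B ls)(x := px)) (v_FO K Auth w)) x
              \<le> shapley N (rel_ext q (v_FO K Auth w)) x)"
proof -
  note fN = assms(1) and fK = assms(2) and AK = assms(3) and w0 = assms(4) and xN = assms(5)
    and yN = assms(6) and xy = assms(7) and px0 = assms(8) and ps = assms(10) and LR = assms(11)
    and B0 = assms(12) and dist = assms(13) and sls = assms(14) and srt = assms(15)
  define g where "g = greedy L pstar B ls"
  define c where "c = Cw K Auth w x"
  let ?CA = "coauthors K Auth x"
  have CAN: "?CA \<subseteq> N" unfolding coauthors_def using AK by auto
  have fCA: "finite ?CA" using CAN fN finite_subset by blast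
  have xCA: "x \<notin> ?CA" unfolding coauthors_def by auto
  have lsN: "set ls \<subseteq> N - {x}" using sls CAN xCA by auto
  have ylS: "y \<notin> set ls" using sls by auto
  have c0: "c j \<ge> 0" for j unfolding c_def Cw_def using w0 by (intro sum_nonneg) auto
  have hyp: "\<forall>j\<in>set ls. L j > 0 \<and> pstar j > 0" using lsN ps LR by auto
  have hyp2: "\<forall>j\<in>set ls. L j > 0 \<and> pstar j > 0 \<and> c j \<ge> 0" using hyp c0 by auto
  have gout: "j \<notin> set ls \<Longrightarrow> g j = pstar j" for j unfolding g_def by (rule greedy_out)
  have grange: "j \<in> set ls \<Longrightarrow> 0 \<le> g j \<and> g j \<le> pstar j" for j
    unfolding g_def using greedy_range[OF hyp B0] by blast
  have costls: "cost L R pstar j (g j) = (if j \<in> set ls then L j * (pstar j - g j) else 0)" for j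
  proof (cases "j \<in> set ls")
    case True
    then have "g j \<le> pstar j" using grange by blast
    then show ?thesis using True unfolding cost_def by auto
  next
    case False then show ?thesis using gout unfolding cost_def by simp
  qed
  have P1: "pairwise_attack K Auth N L R pstar B x px y (g(x := px))"
    unfolding pairwise_attack_def feasible_attack_def
  proof (intro conjI ballI)
    show "(g(x := px)) x = px" by simp
  next
    fix j assume j: "j \<in> N - {x}"
    then have "0 \<le> g j \<and> g j \<le> 1"
      using grange gout ps[OF j] by (cases "j \<in> set ls") force+
    then show "0 \<le> (g(x := px)) j" "(g(x := px)) j \<le> 1" using j by auto
  next
    have "(\<Sum>j\<in>N - {x}. cost L R pstar j ((g(x := px)) j)) = (\<Sum>j\<in>N - {x}. (if j \<in> set ls then L j * (pstar j - g j) else 0))"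
      using costls by (intro sum.cong) auto
    also have "\<dots> = (\<Sum>j\<in>set ls. L j * (pstar j - g j))"
    proof -
      have "{j \<in> N - {x}. j \<in> set ls} = set ls" using lsN by auto
      then show ?thesis using fN by (simp add: sum.inter_filter[symmetric])
    qed
    also have "\<dots> \<le> B" unfolding g_def using greedy_cost[OF hyp B0 dist] .
    finally show "(\<Sum>j\<in>N - {x}. cost L R pstar j ((g(x := px)) j)) \<le> B" .
  next
    show "(g(x := px)) y = pstar y" using xy ylS gout by simp
  next
    fix l assume "l \<in> coauthors K Auth y - {x}"
    then have "l \<notin> set ls" "l \<noteq> x" using sls by auto
    then show "(g(x := px)) l = pstar l" using gout by simp
  qed
  have P2: "shapley N (rel_ext (g(x := px)) (v_FO K Auth w)) x \<le> shapley N (rel_ext q (v_FO K Auth w)) x"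
    if q: "pairwise_attack K Auth N L R pstar B x px y q" for q
  proof -
    have qx: "q x = px" and q01: "\<forall>j\<in>N - {x}. 0 \<le> q j \<and> q j \<le> 1"
      and qc: "(\<Sum>j\<in>N - {x}. cost L R pstar j (q j)) \<le> B"
      and qy: "q y = pstar y" and qca: "\<forall>l\<in>coauthors K Auth y - {x}. q l = pstar l"
      using q unfolding pairwise_attack_def feasible_attack_def by auto
    define d where "d j = max 0 (pstar j - q j)" for j
    have d1: "\<forall>j\<in>set ls. 0 \<le> d j \<and> d j \<le> pstar j" using q01 lsN hyp unfolding d_def by auto
    have "(\<Sum>j\<in>set ls. L j * d j) \<le> (\<Sum>j\<in>set ls. cost L R pstar j (q j))"
    proof (rule sum_mono)
      fix j assume j: "j \<in> set ls"
      have "L j > 0" "R j > 0" using LR lsN j by auto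
      then show "L j * d j \<le> cost L R pstar j (q j)" unfolding d_def cost_def
        by (auto intro: mult_nonneg_nonneg)
    qed
    also have "\<dots> \<le> (\<Sum>j\<in>N - {x}. cost L R pstar j (q j))"
      using lsN fN LR by (intro sum_mono2) (auto intro: cost_nonneg)
    also have "\<dots> \<le> B" by (rule qc)
    finally have dB: "(\<Sum>j\<in>set ls. L j * d j) \<le> B" .
    have kn: "(\<Sum>j\<in>set ls. c j * d j) \<le> gain c L pstar B ls"
      using knapsack[OF dist _ hyp2 B0 d1 dB] srt unfolding c_def by blast
    have gg: "(\<Sum>j\<in>set ls. c j * (pstar j - g j)) = gain c L pstar B ls"
      unfolding g_def by (rule greedy_gain[OF dist])
    have ls_part: "(\<Sum>j\<in>set ls. c j * g j) \<le> (\<Sum>j\<in>set ls. c j * q j)"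
    proof -
      have "(\<Sum>j\<in>set ls. c j * q j) \<ge> (\<Sum>j\<in>set ls. c j * pstar j - c j * d j)"
      proof (rule sum_mono)
        fix j assume j: "j \<in> set ls"
        have "q j \<ge> pstar j - d j" unfolding d_def by simp
        then have "c j * q j \<ge> c j * (pstar j - d j)" using c0 by (intro mult_left_mono) auto
        then show "c j * pstar j - c j * d j \<le> c j * q j" by (simp add: algebra_simps)
      qed
      moreover have "(\<Sum>j\<in>set ls. c j * g j) = (\<Sum>j\<in>set ls. c j * pstar j - c j * (pstar j - g j))"
        by (simp add: algebra_simps)
      ultimately show ?thesis using kn gg by (simp add: sum_subtractf)
    qed
    have rest: "(\<Sum>j\<in>?CA - set ls. c j * g j) = (\<Sum>j\<in>?CA - set ls. c j * q j)"
    proof (rule sum.cong[OF refl])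
      fix j assume j: "j \<in> ?CA - set ls"
      then have "j \<in> coauthors K Auth y \<union> {y}" "j \<noteq> x" using sls xCA by auto
      then have "q j = pstar j" using qy qca by auto
      then show "c j * g j = c j * q j" using gout j by simp
    qed
    have lsCA: "set ls \<subseteq> ?CA" using sls by auto
    have "(\<Sum>j\<in>?CA. c j * g j) \<le> (\<Sum>j\<in>?CA. c j * q j)"
      using ls_part rest sum.subset_diff[OF lsCA fCA, of "\<lambda>j. c j * g j"]
        sum.subset_diff[OF lsCA fCA, of "\<lambda>j. c j * q j"] by simp
    moreover have "(\<Sum>j\<in>?CA. c j * (g(x := px)) j) = (\<Sum>j\<in>?CA. c j * g j)"
      using xCA by (intro sum.cong) auto
    ultimately have "(\<Sum>j\<in>?CA. c j * (g(x := px)) j) \<le> (\<Sum>j\<in>?CA. c j * q j)" by simp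
    then have "px / 2 * (\<Sum>j\<in>?CA. c j * (g(x := px)) j) \<le> px / 2 * (\<Sum>j\<in>?CA. c j * q j)"
      using px0 by (intro mult_left_mono) auto
    then show ?thesis
      using shapley_closed[where N=N and K=K and Auth=Auth and x=x and p="g(x := px)" and w=w, OF fN fK AK xN] shapley_closed[where N=N and K=K and Auth=Auth and x=x and p=q and w=w, OF fN fK AK xN] qx
      unfolding c_def by simp
  qed
  show ?thesis using P1 P2 unfolding g_def by blast
qed

end
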